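(* In the setting below, define for $y\in B_r$ $$\psi(y)=\sup_{x\in A:\ \varphi(x)\le|y|}\langle x,y\rangle .$$ Then $\psi(y)=\langle T^{-1}(y),y\rangle$ for $\nu$-almost all $y$.
   Context: Setting: $d\ge2$, $A\subset\mathbb{R}^d$ compact convex, $\mu=\varrho_0\,dx$ a probability measure on $A$ equivalent to Lebesgue measure on $A$, $B_r=\{|x|\le r\}$, $\nu=\varrho_1\,dx$ a probability measure on $B_r$ equivalent to Lebesgue measure on $B_r$. For a compact convex $V$ and $x\in V$, $N_{\partial V,x}=\{\eta\in S^{d-1}:\langle\eta,z-x\rangle\le0\ \forall z\in V\}$. Let $\varphi\colon A\to[0,r]$ be continuous with convex sub-level sets $A_s=\{\varphi\le s\}$; for $x$ with $N_{\partial A_{\varphi(x)},x}$ a singleton let ${\rm n}(x)$ be its element and $T(x)=\varphi(x){\rm n}(x)$ (defined a.e.); assume $\mu\circ T^{-1}=\nu$. $T^{-1}\colon B_r\to A$ denotes a measurable map with $T(T^{-1}(y))=y$ for $\nu$-a.e. $y$ and $T^{-1}(T(x))=x$ for $\mu$-a.e. $x$ (it exists and is $\nu$-a.e. unique). *)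

theory Defs
  imports "HOL-Probability.Probability"
begin

definition normal_cone :: "'a::euclidean_space set \<Rightarrow> 'a \<Rightarrow> 'a set" where
  "normal_cone V x = {\<eta>. norm \<eta> = 1 \<and> (\<forall>z\<in>V. inner \<eta> (z - x) \<le> 0)}"

definition sublevel :: "'a set \<Rightarrow> ('a \<Rightarrow> real) \<Rightarrow> real \<Rightarrow> 'a set" where
  "sublevel A \<phi> s = {x\<in>A. \<phi> x \<le> s}"

definition has_unique_normal :: "'a::euclidean_space set \<Rightarrow> ('a \<Rightarrow> real) \<Rightarrow> 'a \<Rightarrow> bool" where
  "has_unique_normal A \<phi> x \<longleftrightarrow> (\<exists>\<eta>. normal_cone (sublevel A \<phi> (\<phi> x)) x = {\<eta>})"

definition unit_normal :: "'a::euclidean_space set \<Rightarrow> ('a \<Rightarrow> real) \<Rightarrow> 'a \<Rightarrow> 'a" where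
  "unit_normal A \<phi> x = (THE \<eta>. normal_cone (sublevel A \<phi> (\<phi> x)) x = {\<eta>})"

text \<open>T(x) = phi(x) n(x); set to 0 where n(x) is undefined (a null set by assumption).\<close>
definition transport_map :: "'a::euclidean_space set \<Rightarrow> ('a \<Rightarrow> real) \<Rightarrow> 'a \<Rightarrow> 'a" where
  "transport_map A \<phi> x = (if has_unique_normal A \<phi> x then \<phi> x *\<^sub>R unit_normal A \<phi> x else 0)"

definition psi_fun :: "'a::euclidean_space set \<Rightarrow> ('a \<Rightarrow> real) \<Rightarrow> 'a \<Rightarrow> real" where
  "psi_fun A \<phi> y = (SUP x\<in>{x\<in>A. \<phi> x \<le> norm y}. inner x y)"

end

theory Submission
  imports Defs
begin

theorem lemma12:
  fixes A :: "'a::euclidean_space set" and r :: real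
    and \<rho>0 \<rho>1 :: "'a \<Rightarrow> real" and \<phi> :: "'a \<Rightarrow> real" and Tinv :: "'a \<Rightarrow> 'a"
    and \<mu> \<nu> :: "'a measure"
  assumes dim: "DIM('a) \<ge> 2"
    and A: "compact A" "convex A"
    and mu_def: "\<mu> = density lborel (\<lambda>x. ennreal (\<rho>0 x) * indicator A x)"
    and rho0: "\<rho>0 \<in> borel_measurable lborel" "\<And>x. \<rho>0 x \<ge> 0"
    and mu_prob: "prob_space \<mu>"
    and mu_equiv: "\<And>E. E \<in> sets lborel \<Longrightarrow> (emeasure \<mu> E = 0 \<longleftrightarrow> emeasure lborel (E \<inter> A) = 0)"
    and nu_def: "\<nu> = density lborel (\<lambda>y. ennreal (\<rho>1 y) * indicator (cball 0 r) y)"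
    and rho1: "\<rho>1 \<in> borel_measurable lborel" "\<And>y. \<rho>1 y \<ge> 0"
    and nu_prob: "prob_space \<nu>"
    and nu_equiv: "\<And>E. E \<in> sets lborel \<Longrightarrow> (emeasure \<nu> E = 0 \<longleftrightarrow> emeasure lborel (E \<inter> cball 0 r) = 0)"
    and phi_cont: "continuous_on A \<phi>"
    and phi_range: "\<And>x. x \<in> A \<Longrightarrow> 0 \<le> \<phi> x \<and> \<phi> x \<le> r"
    and phi_sub: "\<And>s. convex (sublevel A \<phi> s)"
    and T_ae: "AE x in \<mu>. has_unique_normal A \<phi> x"
    and T_meas: "transport_map A \<phi> \<in> measurable \<mu> lborel"
    and push: "distr \<mu> lborel (transport_map A \<phi>) = \<nu>"
    and Tinv_meas: "Tinv \<in> measurable \<nu> lborel"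
    and Tinv_range: "\<And>y. y \<in> cball 0 r \<Longrightarrow> Tinv y \<in> A"
    and Tinv_right: "AE y in \<nu>. transport_map A \<phi> (Tinv y) = y"
    and Tinv_left: "AE x in \<mu>. Tinv (transport_map A \<phi> x) = x"
  shows "AE y in \<nu>. psi_fun A \<phi> y = inner (Tinv y) y"
proof -
  let ?T = "transport_map A \<phi>"
  define N where "N = {0} \<union> - cball (0::'a) r"
  have Nsets: "N \<in> sets lborel" unfolding N_def by auto
  have "emeasure lborel (N \<inter> cball 0 r) = 0"
  proof -
    have "N \<inter> cball 0 r \<subseteq> {0}" unfolding N_def by auto
    moreover have "{0::'a} \<in> null_sets lborel" by (simp add: countable_imp_null_set_lborel)
    ultimately have "N \<inter> cball 0 r \<in> null_sets lborel"
    proof -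
      have "cball (0::'a) r \<in> sets lborel" by simp
      hence "N \<inter> cball 0 r \<in> sets lborel" using Nsets by (rule sets.Int[rotated])
      thus ?thesis using null_sets_subset[OF \<open>{0::'a} \<in> null_sets lborel\<close>] \<open>N \<inter> cball 0 r \<subseteq> {0}\<close> by blast
    qed
    thus ?thesis by auto
  qed
  hence "emeasure \<nu> N = 0" using nu_equiv[OF Nsets] by simp
  moreover have "N \<in> sets \<nu>" using Nsets nu_def by simp
  ultimately have Nnull: "N \<in> null_sets \<nu>" by auto
  have ae1: "AE y in \<nu>. y \<noteq> 0 \<and> y \<in> cball 0 r"
    by (rule AE_I'[OF Nnull]) (auto simp: N_def)
  show ?thesis using ae1 Tinv_right
  proof eventually_elim
    case (elim y)
    define x where "x = Tinv y"
    have xA: "x \<in> A" using elim Tinv_range x_def by auto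
    have Tx: "?T x = y" using elim x_def by simp
    have hu: "has_unique_normal A \<phi> x"
    proof (rule ccontr)
      assume "\<not> ?thesis"
      hence "?T x = 0" by (simp add: transport_map_def)
      thus False using Tx elim by simp
    qed
    then obtain \<eta> where eta: "normal_cone (sublevel A \<phi> (\<phi> x)) x = {\<eta>}"
      unfolding has_unique_normal_def by blast
    have un: "unit_normal A \<phi> x = \<eta>"
      unfolding unit_normal_def using eta by (rule the_equality) (metis eta singleton_inject)
    have yeq: "y = \<phi> x *\<^sub>R \<eta>" using Tx hu un by (simp add: transport_map_def)
    have etan: "norm \<eta> = 1" "\<forall>z\<in>sublevel A \<phi> (\<phi> x). inner \<eta> (z - x) \<le> 0"
      using eta unfolding normal_cone_def by auto
    have phx: "0 \<le> \<phi> x" using phi_range xA by auto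
    have ny: "norm y = \<phi> x" using yeq etan(1) phx by simp
    have S: "{z\<in>A. \<phi> z \<le> norm y} = sublevel A \<phi> (\<phi> x)"
      unfolding sublevel_def ny ..
    have le: "inner z y \<le> inner x y" if "z \<in> sublevel A \<phi> (\<phi> x)" for z
    proof -
      have "inner \<eta> (z - x) \<le> 0" using etan(2) that by auto
      hence "inner z \<eta> \<le> inner x \<eta>" by (simp add: inner_diff_right inner_commute)
      hence "\<phi> x * inner z \<eta> \<le> \<phi> x * inner x \<eta>" using phx by (rule mult_left_mono)
      thus ?thesis using yeq by simp
    qed
    have xin: "x \<in> sublevel A \<phi> (\<phi> x)" using xA by (simp add: sublevel_def)
    have "psi_fun A \<phi> y = inner x y"
      unfolding psi_fun_def S
      by (rule cSup_eq_maximum) (use xin le in auto)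
    thus ?case using x_def by simp
  qed
qed

end
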